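(* Consider problem (P) under Assumptions (A1)–(A3) with $\inf_{x\in\mathcal{X}}f(x)>-\infty$, let $x^0\in\mathcal{X}$, and let $\varepsilon>0$. Then the SMIL algorithm terminates after finitely many iterations, returning a point $x^k\in\mathcal{X}$ with $\Psi(x^k;\Delta_k)\le\varepsilon$, i.e. an $\varepsilon$-critical point of (P).
   Context: Problem (P): minimize $f(x)$ subject to $x\in\mathcal{X}:=\bar{\mathcal{X}}\cap\{x\in\mathbb{R}^n : x_i\in\mathbb{Z}\ \forall i\in\mathcal{I}\}$, with $\bar{\mathcal{X}}\subseteq\mathbb{R}^n$ a closed convex polyhedral set, $\mathcal{I}\subseteq\{1,\dots,n\}$, $\mathcal{X}\ne\emptyset$, $f:\mathbb{R}^n\to\mathbb{R}$. Write $x=(u,z)$ with $u$ the components with indices not in $\mathcal{I}$ and $z$ those in $\mathcal{I}$. Assumptions: (A1) $f$ is $C^1$ with locally Lipschitz gradient; (A2) $f(u,z)=f_1(u)+\langle f_2,z\rangle$; (A3) the feasible integer parts $\{z:(u,z)\in\mathcal{X}\}$ form a bounded set. $\|x\|_{PL}$ is the $\ell_1$- or $\ell_\infty$-norm of the components with indices not in $\mathcal{I}$; $\mathbb{B}_{PL}(x,\Delta):=\{w:\|w-x\|_{PL}\le\Delta\}$. Criticality measure: $\Psi(x;\Delta):=\max\{\langle\nabla f(x),x-w\rangle : w\in\mathcal{X}\cap\mathbb{B}_{PL}(x,\Delta)\}$; $\bar x\in\mathcal{X}$ is $\varepsilon$-$\Delta$-critical if $\Psi(\bar x;\Delta)\le\varepsilon$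 and $\varepsilon$-critical if it is $\varepsilon$-$\Delta$-critical for some $\Delta>0$. SMIL algorithm. Input $x^0\in\mathcal{X}$, $\varepsilon\ge0$; parameters $\Delta_0>0$, $\varrho,\kappa\in(0,1)$, $\kappa_m\in(0,1]$. Set $m_0:=f(x^0)$. For $k=0,1,2,\dots$: (S1) compute $x^{k+1}\in\arg\min\{\langle\nabla f(x^k),x\rangle : x\in\mathcal{X}\cap\mathbb{B}_{PL}(x^k,\Delta_k)\}$; (S2) set $a_k:=m_k-f(x^{k+1})$ and $\Psi_k:=\langle\nabla f(x^k),x^k-x^{k+1}\rangle$ (so $\Psi_k=\Psi(x^k;\Delta_k)$); (S3) if $\Psi_k\le\varepsilon$, return $x^k$; (S4) if $a_k<\varrho\Psi_k$, set $\Delta_k\leftarrow\kappa\Delta_k$ and go back to (S1); (S5) set $m_{k+1}:=(1-\kappa_m)m_k+\kappa_m f(x^{k+1})$; (S6) choose $\Delta_{k+1}$ either by the rule $\Delta_{k+1}=\kappa\Delta_k$ if $\rho_k<\varrho_1$, $=\Delta_k$ if $\varrho_1\le\rho_k<\varrho_2$, $=\Delta_k/\kappa$ if $\rho_k\ge\varrho_2$, where $\rho_k:=a_k/\Psi_k$ and $\varrho\le\varrho_1<\varrho_2<1$; or by a reset $\Delta_{k+1}\in[\Delta_{\min},\Delta_{\max}]$, $0<\Delta_{\min}\le\Delta_{\max}$. *)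

theory Defs
  imports "HOL-Analysis.Analysis"
begin

text \<open>Points of R^n are vectors real^'n; I is the set of integer-constrained indices.
  The flag l1 selects the l1-norm (True) or the l-infinity-norm (False) on the
  components with indices not in I.\<close>

definition plnorm :: "bool \<Rightarrow> 'n::finite set \<Rightarrow> real^'n \<Rightarrow> real" where
  "plnorm l1 I x =
     (if l1 then (\<Sum>i\<in>UNIV - I. \<bar>x$i\<bar>)
      else Max (insert 0 ((\<lambda>i. \<bar>x$i\<bar>) ` (UNIV - I))))"

definition plball :: "bool \<Rightarrow> 'n::finite set \<Rightarrow> real^'n \<Rightarrow> real \<Rightarrow> (real^'n) set" where
  "plball l1 I x \<Delta> = {w. plnorm l1 I (w - x) \<le> \<Delta>}"

definition feasible :: "(real^'n::finite) set \<Rightarrow> 'n set \<Rightarrow> (real^'n) set" where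
  "feasible Xbar I = Xbar \<inter> {x. \<forall>i\<in>I. x$i \<in> \<int>}"

definition Psi :: "(real^'n::finite \<Rightarrow> real^'n) \<Rightarrow> (real^'n) set \<Rightarrow> bool \<Rightarrow> 'n set
                   \<Rightarrow> real^'n \<Rightarrow> real \<Rightarrow> real" where
  "Psi g X l1 I x \<Delta> = (SUP w \<in> X \<inter> plball l1 I x \<Delta>. g x \<bullet> (x - w))"

definition sub_argmin :: "(real^'n::finite \<Rightarrow> real^'n) \<Rightarrow> (real^'n) set \<Rightarrow> bool \<Rightarrow> 'n set
                   \<Rightarrow> real^'n \<Rightarrow> real \<Rightarrow> (real^'n) set" where
  "sub_argmin g X l1 I x \<Delta> =
     {y \<in> X \<inter> plball l1 I x \<Delta>. \<forall>w \<in> X \<inter> plball l1 I x \<Delta>. g x \<bullet> y \<le> g x \<bullet> w}"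

text \<open>One step of SMIL on the state (x_k, m_k, Delta_k): either an unsuccessful trial
  (S4: Delta_k is shrunk) or an accepted iteration (S5, S6 with the update rule or a reset).
  A step is only possible if the stopping test (S3) fails; the algorithm stops (returns x_k)
  exactly in states without successor.\<close>
fun smil_step :: "(real^'n::finite \<Rightarrow> real) \<Rightarrow> (real^'n \<Rightarrow> real^'n) \<Rightarrow> (real^'n) set \<Rightarrow> bool
      \<Rightarrow> 'n set \<Rightarrow> real \<Rightarrow> real \<Rightarrow> real \<Rightarrow> real \<Rightarrow> real \<Rightarrow> real \<Rightarrow> real \<Rightarrow> real
      \<Rightarrow> ((real^'n) \<times> real \<times> real) \<Rightarrow> ((real^'n) \<times> real \<times> real) \<Rightarrow> bool" where
  "smil_step f g X l1 I \<epsilon> \<rho> \<kappa> \<kappa>m \<rho>1 \<rho>2 \<Delta>min \<Delta>max (x, m, \<Delta>) (x', m', \<Delta>') \<longleftrightarrow>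
     (\<exists>y \<in> sub_argmin g X l1 I x \<Delta>.
        let \<Psi> = g x \<bullet> (x - y); a = m - f y in
        \<epsilon> < \<Psi> \<and>
        ((a < \<rho> * \<Psi> \<and> x' = x \<and> m' = m \<and> \<Delta>' = \<kappa> * \<Delta>) \<or>
         (\<rho> * \<Psi> \<le> a \<and> x' = y \<and> m' = (1 - \<kappa>m) * m + \<kappa>m * f y \<and>
          (\<Delta>' = (if a / \<Psi> < \<rho>1 then \<kappa> * \<Delta> else if a / \<Psi> < \<rho>2 then \<Delta> else \<Delta> / \<kappa>)
           \<or> (\<Delta>min \<le> \<Delta>' \<and> \<Delta>' \<le> \<Delta>max)))))"

end

theory Submission imports Defs begin

lemma plnorm_ge0: "0 \<le> plnorm l1 I (v::real^'n::finite)"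
  unfolding plnorm_def by (auto intro: sum_nonneg Max_ge)

lemma plnorm_comp: "i \<notin> I \<Longrightarrow> \<bar>v$i\<bar> \<le> plnorm l1 I (v::real^'n::finite)"
  unfolding plnorm_def by (auto intro!: member_le_sum Max_ge)

lemma plnorm_cong: "(\<forall>i. i \<notin> I \<longrightarrow> v$i = w$i) \<Longrightarrow> plnorm l1 I (v::real^'n::finite) = plnorm l1 I w"
  unfolding plnorm_def by (auto intro!: sum.cong image_cong)

lemma plnorm_norm: "(\<forall>i\<in>I. v$i = 0) \<Longrightarrow> norm (v::real^'n::finite) \<le> real CARD('n) * plnorm l1 I v"
proof -
  assume h: "\<forall>i\<in>I. v$i = 0"
  have "norm v \<le> (\<Sum>i\<in>UNIV. \<bar>v$i\<bar>)" by (rule norm_le_l1_cart)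
  also have "\<dots> \<le> (\<Sum>i\<in>(UNIV::'n set). plnorm l1 I v)"
    apply (rule sum_mono) using h plnorm_comp plnorm_ge0 by (metis abs_zero)
  finally show ?thesis by simp
qed

lemma closed_plball: "closed (plball l1 I (x::real^'n::finite) \<Delta>)"
proof (cases l1)
  case True
  then show ?thesis unfolding plball_def plnorm_def
    by (auto intro!: closed_Collect_le continuous_intros)
next
  case False
  have "plball l1 I x \<Delta> = {w. 0 \<le> \<Delta>} \<inter> (\<Inter>i\<in>UNIV - I. {w. \<bar>w$i - x$i\<bar> \<le> \<Delta>})"
    unfolding plball_def plnorm_def using False by auto
  moreover have "closed ({w::real^'n. 0 \<le> \<Delta>} \<inter> (\<Inter>i\<in>UNIV - I. {w. \<bar>w$i - x$i\<bar> \<le> \<Delta>}))"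
    by (intro closed_Int closed_INT ballI closed_Collect_le continuous_intros)
  ultimately show ?thesis by simp
qed

lemma closed_feasible: "polyhedron Xbar \<Longrightarrow> closed (feasible Xbar (I::'n::finite set))"
proof -
  assume p: "polyhedron Xbar"
  have "{x::real^'n. \<forall>i\<in>I. x$i \<in> \<int>} = (\<Inter>i\<in>I. (\<lambda>x. x$i) -` \<int>)" by auto
  moreover have "closed (\<Inter>i\<in>I. (\<lambda>x::real^'n. x$i) -` \<int>)"
    by (intro closed_INT ballI closed_vimage_vec_nth closed_Ints)
  ultimately show ?thesis unfolding feasible_def using polyhedron_imp_closed[OF p] by auto
qed


lemma compact_Z:
  assumes poly: "polyhedron Xbar"
    and B: "\<forall>x\<in>feasible Xbar I. \<forall>i\<in>I. \<bar>x$i\<bar> \<le> B"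
  shows "compact (feasible Xbar I \<inter> plball l1 I (x::real^'n::finite) \<Delta>)"
proof -
  have cl: "closed (feasible Xbar I \<inter> plball l1 I x \<Delta>)"
    using closed_feasible[OF poly] closed_plball by blast
  have "\<forall>w\<in>feasible Xbar I \<inter> plball l1 I x \<Delta>. norm w \<le> (\<Sum>i\<in>UNIV. \<bar>B\<bar> + \<bar>x$i\<bar> + \<bar>\<Delta>\<bar>)"
  proof
    fix w assume w: "w \<in> feasible Xbar I \<inter> plball l1 I x \<Delta>"
    have "norm w \<le> (\<Sum>i\<in>UNIV. \<bar>w$i\<bar>)" by (rule norm_le_l1_cart)
    also have "\<dots> \<le> (\<Sum>i\<in>UNIV. \<bar>B\<bar> + \<bar>x$i\<bar> + \<bar>\<Delta>\<bar>)"
    proof (rule sum_mono)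
      fix i
      show "\<bar>w$i\<bar> \<le> \<bar>B\<bar> + \<bar>x$i\<bar> + \<bar>\<Delta>\<bar>"
      proof (cases "i \<in> I")
        case True then show ?thesis using B w by force
      next
        case False
        have "\<bar>(w - x)$i\<bar> \<le> plnorm l1 I (w - x)" using plnorm_comp False by blast
        also have "\<dots> \<le> \<Delta>" using w unfolding plball_def by auto
        finally show ?thesis by simp
      qed
    qed
    finally show "norm w \<le> (\<Sum>i\<in>UNIV. \<bar>B\<bar> + \<bar>x$i\<bar> + \<bar>\<Delta>\<bar>)" .
  qed
  then have "bounded (feasible Xbar I \<inter> plball l1 I x \<Delta>)" unfolding bounded_iff by blast
  then show ?thesis using cl compact_eq_bounded_closed by blast
qed

lemma A2_shift:
  assumes f1: "\<forall>x y. (\<forall>i. i \<notin> I \<longrightarrow> x$i = y$i) \<longrightarrow> f1 x = f1 y"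
    and fe: "\<forall>x. f x = f1 x + (\<Sum>i\<in>I. c$i * x$i)"
    and e: "\<forall>i. i \<notin> I \<longrightarrow> e$i = 0"
  shows "f (w + e) = f w + (\<Sum>i\<in>I. c$i * e$i :: real)"
proof -
  have "f1 (w + e) = f1 w" using f1 e by auto
  moreover have "(\<Sum>i\<in>I. c$i * (w+e)$i) = (\<Sum>i\<in>I. c$i * w$i) + (\<Sum>i\<in>I. c$i * e$i)"
    by (simp add: distrib_left sum.distrib[symmetric])
  ultimately show ?thesis using fe by simp
qed

lemma A2_grad:
  assumes f1: "\<forall>x y. (\<forall>i. i \<notin> I \<longrightarrow> x$i = y$i) \<longrightarrow> f1 x = f1 y"
    and fe: "\<forall>x. f x = f1 x + (\<Sum>i\<in>I. c$i * x$i)"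
    and e: "\<forall>i. i \<notin> I \<longrightarrow> e$i = 0"
    and der: "(f has_derivative (\<lambda>h. G \<bullet> h)) (at (x::real^'n::finite))"
  shows "G \<bullet> e = (\<Sum>i\<in>I. c$i * e$i)"
proof -
  define K where "K = (\<Sum>i\<in>I. c$i * e$i)"
  have eq: "(f \<circ> (\<lambda>t::real. x + t *\<^sub>R e)) = (\<lambda>t. f x + t * K)"
  proof
    fix t :: real
    have "\<forall>i. i \<notin> I \<longrightarrow> (t *\<^sub>R e)$i = 0" using e by simp
    from A2_shift[OF f1 fe this, of x]
    have "f (x + t *\<^sub>R e) = f x + (\<Sum>i\<in>I. c$i * (t * e$i))" by simp
    also have "\<dots> = f x + t * K" unfolding K_def by (simp add: sum_distrib_left algebra_simps)
    finally show "(f \<circ> (\<lambda>t::real. x + t *\<^sub>R e)) t = f x + t * K" by simp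
  qed
  have d1: "((\<lambda>t::real. x + t *\<^sub>R e) has_derivative (\<lambda>s. s *\<^sub>R e)) (at 0)"
    by (auto intro!: derivative_eq_intros)
  have der': "(f has_derivative (\<lambda>h. G \<bullet> h)) (at ((\<lambda>t::real. x + t *\<^sub>R e) 0))"
    using der by simp
  have "((f \<circ> (\<lambda>t::real. x + t *\<^sub>R e)) has_derivative ((\<lambda>h. G \<bullet> h) \<circ> (\<lambda>s. s *\<^sub>R e))) (at 0)"
    by (rule diff_chain_at[OF d1 der'])
  then have a: "((\<lambda>t. f x + t * K) has_derivative ((\<lambda>h. G \<bullet> h) \<circ> (\<lambda>s. s *\<^sub>R e))) (at 0)"
    using eq by simp
  have b: "((\<lambda>t. f x + t * K) has_derivative (\<lambda>s. s * K)) (at (0::real))"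
    by (auto intro!: derivative_eq_intros)
  have "((\<lambda>h. G \<bullet> h) \<circ> (\<lambda>s. s *\<^sub>R e)) = (\<lambda>s. s * K)"
    using has_derivative_unique[OF a b] .
  then have "((\<lambda>h. G \<bullet> h) \<circ> (\<lambda>s. s *\<^sub>R e)) 1 = 1 * K" by metis
  then show ?thesis unfolding K_def by simp
qed


locale smil_loc =
  fixes f :: "real^'n::finite \<Rightarrow> real" and g :: "real^'n \<Rightarrow> real^'n"
    and Xbar :: "(real^'n) set" and I :: "'n set" and l1 :: bool
    and \<epsilon> \<rho> \<kappa> \<kappa>m \<rho>1 \<rho>2 \<Delta>min \<Delta>max :: real
  assumes poly: "polyhedron Xbar"
    and A1_grad: "\<forall>x. (f has_derivative (\<lambda>h. g x \<bullet> h)) (at x)"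
    and A2: "\<exists>f1 :: real^'n \<Rightarrow> real. \<exists>c :: real^'n.
               (\<forall>x y. (\<forall>i. i \<notin> I \<longrightarrow> x$i = y$i) \<longrightarrow> f1 x = f1 y) \<and>
               (\<forall>x. f x = f1 x + (\<Sum>i\<in>I. c$i * x$i))"
    and A3: "\<exists>B. \<forall>x\<in>feasible Xbar I. \<forall>i\<in>I. \<bar>x$i\<bar> \<le> B"
    and eps: "\<epsilon> > 0"
    and par: "0 < \<rho>" "\<rho> < 1" "0 < \<kappa>" "\<kappa> < 1" "0 < \<kappa>m" "\<kappa>m \<le> 1"
             "\<rho> \<le> \<rho>1" "\<rho>1 < \<rho>2" "\<rho>2 < 1" "0 < \<Delta>min" "\<Delta>min \<le> \<Delta>max"
begin

abbreviation "X \<equiv> feasible Xbar I"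
abbreviation "S \<equiv> smil_step f g X l1 I \<epsilon> \<rho> \<kappa> \<kappa>m \<rho>1 \<rho>2 \<Delta>min \<Delta>max"

lemma step_inv:
  assumes st: "S (x,m,\<Delta>) (x',m',\<Delta>')" and "x \<in> X" "f x \<le> m" "0 < \<Delta>"
  shows "x' \<in> X \<and> f x' \<le> m' \<and> 0 < \<Delta>'"
proof -
  from st obtain y where y: "y \<in> sub_argmin g X l1 I x \<Delta>" and
    h: "\<epsilon> < g x \<bullet> (x - y)"
       "(m - f y < \<rho> * (g x \<bullet> (x - y)) \<and> x' = x \<and> m' = m \<and> \<Delta>' = \<kappa> * \<Delta>) \<or>
        (\<rho> * (g x \<bullet> (x - y)) \<le> m - f y \<and> x' = y \<and> m' = (1 - \<kappa>m) * m + \<kappa>m * f y \<and>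
          (\<Delta>' = (if (m - f y) / (g x \<bullet> (x - y)) < \<rho>1 then \<kappa> * \<Delta> else if (m - f y) / (g x \<bullet> (x - y)) < \<rho>2 then \<Delta> else \<Delta> / \<kappa>)
           \<or> (\<Delta>min \<le> \<Delta>' \<and> \<Delta>' \<le> \<Delta>max)))"
    by (auto simp: Let_def)
  have yX: "y \<in> X" using y unfolding sub_argmin_def by auto
  show ?thesis
    using h(2)
  proof
    assume "m - f y < \<rho> * (g x \<bullet> (x - y)) \<and> x' = x \<and> m' = m \<and> \<Delta>' = \<kappa> * \<Delta>"
    then show ?thesis using assms par by auto
  next
    assume a: "\<rho> * (g x \<bullet> (x - y)) \<le> m - f y \<and> x' = y \<and> m' = (1 - \<kappa>m) * m + \<kappa>m * f y \<and>
          (\<Delta>' = (if (m - f y) / (g x \<bullet> (x - y)) < \<rho>1 then \<kappa> * \<Delta> else if (m - f y) / (g x \<bullet> (x - y)) < \<rho>2 then \<Delta> else \<Delta> / \<kappa>)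
           \<or> (\<Delta>min \<le> \<Delta>' \<and> \<Delta>' \<le> \<Delta>max))"
    have "0 < \<rho> * (g x \<bullet> (x - y))" using h(1) eps par by auto
    then have "f y \<le> m" using a by linarith
    then have "f y \<le> m'"
    proof -
      have "m' - f y = (1 - \<kappa>m) * (m - f y)" using a by (simp add: algebra_simps)
      moreover have "0 \<le> (1 - \<kappa>m) * (m - f y)" using par \<open>f y \<le> m\<close> by auto
      ultimately show ?thesis by linarith
    qed
    moreover have "0 < \<Delta>'" using a par \<open>0 < \<Delta>\<close> by (auto split: if_splits)
    ultimately show ?thesis using a yX by auto
  qed
qed

lemma step_dec:
  assumes st: "S (x,m,\<Delta>) (x',m',\<Delta>')"
  shows "m' \<le> m \<and> (m' \<le> m - \<kappa>m*\<rho>*\<epsilon> \<or> (x' = x \<and> m' = m \<and> \<Delta>' = \<kappa>*\<Delta> \<and>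
     (\<exists>y\<in>sub_argmin g X l1 I x \<Delta>. \<epsilon> < g x \<bullet> (x - y) \<and> m - f y < \<rho> * (g x \<bullet> (x - y)))))"
proof -
  from st obtain y where y: "y \<in> sub_argmin g X l1 I x \<Delta>" and
    h: "\<epsilon> < g x \<bullet> (x - y)"
       "(m - f y < \<rho> * (g x \<bullet> (x - y)) \<and> x' = x \<and> m' = m \<and> \<Delta>' = \<kappa> * \<Delta>) \<or>
        (\<rho> * (g x \<bullet> (x - y)) \<le> m - f y \<and> x' = y \<and> m' = (1 - \<kappa>m) * m + \<kappa>m * f y)"
    by (auto simp: Let_def)
  show ?thesis
    using h(2)
  proof
    assume "m - f y < \<rho> * (g x \<bullet> (x - y)) \<and> x' = x \<and> m' = m \<and> \<Delta>' = \<kappa> * \<Delta>"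
    then show ?thesis using y h(1) by auto
  next
    assume a: "\<rho> * (g x \<bullet> (x - y)) \<le> m - f y \<and> x' = y \<and> m' = (1 - \<kappa>m) * m + \<kappa>m * f y"
    have "\<rho> * \<epsilon> \<le> \<rho> * (g x \<bullet> (x - y))" using h(1) par by auto
    then have "\<rho> * \<epsilon> \<le> m - f y" using a by linarith
    then have "\<kappa>m * (\<rho> * \<epsilon>) \<le> \<kappa>m * (m - f y)" using par by auto
    moreover have "m' = m - \<kappa>m * (m - f y)" using a by (simp add: algebra_simps)
    moreover have "0 \<le> \<kappa>m * (\<rho> * \<epsilon>)" using par eps by auto
    ultimately show ?thesis by (auto simp: algebra_simps)
  qed
qed

end
context smil_loc begin

lemma terminal:
  assumes xX: "x \<in> X" and D: "0 < \<Delta>" and nc: "\<not> (\<exists>c. S (x,m,\<Delta>) c)"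
  shows "Psi g X l1 I x \<Delta> \<le> \<epsilon>"
proof -
  let ?Z = "X \<inter> plball l1 I x \<Delta>"
  have "plnorm l1 I (x - x) = 0" unfolding plnorm_def
  proof (cases "UNIV - I = {}")
    case True then show "(if l1 then \<Sum>i\<in>UNIV - I. \<bar>(x - x) $ i\<bar> else Max (insert 0 ((\<lambda>i. \<bar>(x - x) $ i\<bar>) ` (UNIV - I)))) = 0" unfolding True by simp
  next
    case False then have "(\<lambda>i. \<bar>(x - x) $ i\<bar>) ` (UNIV - I) = {0}" by auto
    then show "(if l1 then \<Sum>i\<in>UNIV - I. \<bar>(x - x) $ i\<bar> else Max (insert 0 ((\<lambda>i. \<bar>(x - x) $ i\<bar>) ` (UNIV - I)))) = 0" by simp
  qed
  then have xZ: "x \<in> ?Z" using xX D unfolding plball_def by auto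
  obtain B where B: "\<forall>x\<in>X. \<forall>i\<in>I. \<bar>x$i\<bar> \<le> B" using A3 by blast
  have cZ: "compact ?Z" by (rule compact_Z[OF poly B])
  have "continuous_on ?Z (\<lambda>w. g x \<bullet> w)" by (intro continuous_intros)
  then obtain y where yZ: "y \<in> ?Z" and ymin: "\<forall>w\<in>?Z. g x \<bullet> y \<le> g x \<bullet> w"
    using continuous_attains_inf[OF cZ, of "\<lambda>w. g x \<bullet> w"] xZ by blast
  have ys: "y \<in> sub_argmin g X l1 I x \<Delta>" unfolding sub_argmin_def using yZ ymin by auto
  have le: "g x \<bullet> (x - y) \<le> \<epsilon>"
  proof (rule ccontr)
    assume "\<not> g x \<bullet> (x - y) \<le> \<epsilon>"
    then have gt: "\<epsilon> < g x \<bullet> (x - y)" by simp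
    show False
    proof (cases "m - f y < \<rho> * (g x \<bullet> (x - y))")
      case True
      have "S (x,m,\<Delta>) (x,m,\<kappa>*\<Delta>)" using ys gt True by (auto simp: Let_def)
      then show False using nc by blast
    next
      case False
      have "S (x,m,\<Delta>) (y, (1 - \<kappa>m) * m + \<kappa>m * f y, \<Delta>min)"
        using ys gt False par by (auto simp: Let_def)
      then show False using nc by blast
    qed
  qed
  have "\<forall>w\<in>?Z. g x \<bullet> (x - w) \<le> \<epsilon>"
  proof
    fix w assume "w \<in> ?Z"
    then have "g x \<bullet> y \<le> g x \<bullet> w" using ymin by auto
    then show "g x \<bullet> (x - w) \<le> \<epsilon>" using le by (simp add: inner_diff_right)
  qed
  then show ?thesis unfolding Psi_def using xZ by (intro cSUP_least) auto
qed

lemma no_small: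
  assumes xX: "x \<in> X" and fm: "f x \<le> m"
  shows "\<exists>D>0. \<forall>\<Delta>. \<Delta> < D \<longrightarrow>
          \<not> (\<exists>y\<in>sub_argmin g X l1 I x \<Delta>. \<epsilon> < g x \<bullet> (x - y) \<and> m - f y < \<rho> * (g x \<bullet> (x - y)))"
proof -
  obtain f1 c where f1: "\<forall>x y. (\<forall>i. i \<notin> I \<longrightarrow> x$i = y$i) \<longrightarrow> f1 x = f1 y"
    and fe: "\<forall>x. f x = f1 x + (\<Sum>i\<in>I. c$i * x$i)" using A2 by blast
  have der: "(f has_derivative (\<lambda>h. g x \<bullet> h)) (at x)" using A1_grad by blast
  then obtain d where d: "d > 0" and
    dd: "\<forall>z. norm (z - x) < d \<longrightarrow> norm (f z - f x - g x \<bullet> (z - x)) \<le> 1 * norm (z - x)"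
    unfolding has_derivative_at_alt by (meson zero_less_one)
  define C where "C = real CARD('n)"
  have C: "C > 0" unfolding C_def by simp
  define D where "D = min d ((1 - \<rho>) * \<epsilon>) / C"
  have Dpos: "D > 0" unfolding D_def using C d par eps by auto
  show ?thesis
  proof (intro exI[of _ D] conjI allI impI Dpos notI)
    fix \<Delta> assume DD: "\<Delta> < D"
    assume "\<exists>y\<in>sub_argmin g X l1 I x \<Delta>. \<epsilon> < g x \<bullet> (x - y) \<and> m - f y < \<rho> * (g x \<bullet> (x - y))"
    then obtain y where ys: "y \<in> sub_argmin g X l1 I x \<Delta>" and
      gt: "\<epsilon> < g x \<bullet> (x - y)" and lt: "m - f y < \<rho> * (g x \<bullet> (x - y))" by blast
    have pl: "plnorm l1 I (y - x) \<le> \<Delta>" using ys unfolding sub_argmin_def plball_def by auto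
    define y' where "y' = (\<chi> i. if i \<in> I then x$i else y$i)"
    define v where "v = y' - x"
    define e where "e = y - y'"
    have v0: "\<forall>i\<in>I. v$i = 0" unfolding v_def y'_def by simp
    have e0: "\<forall>i. i \<notin> I \<longrightarrow> e$i = 0" unfolding e_def y'_def by simp
    have "plnorm l1 I v = plnorm l1 I (y - x)"
      by (rule plnorm_cong) (simp add: v_def y'_def)
    then have "norm v \<le> C * plnorm l1 I (y - x)" using plnorm_norm[OF v0, of l1] unfolding C_def by simp
    also have "\<dots> \<le> C * \<Delta>" using pl C by auto
    also have "\<dots> < C * D" using DD C by auto
    also have "\<dots> = min d ((1 - \<rho>) * \<epsilon>)" unfolding D_def using C by simp
    finally have nv: "norm v < min d ((1 - \<rho>) * \<epsilon>)" .
    have R: "\<bar>f y' - f x - g x \<bullet> v\<bar> \<le> norm v" using dd nv unfolding v_def by auto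
    have fy: "f y = f y' + (\<Sum>i\<in>I. c$i * e$i)"
      using A2_shift[OF f1 fe e0, of y'] unfolding e_def by simp
    have ge: "g x \<bullet> e = (\<Sum>i\<in>I. c$i * e$i)" by (rule A2_grad[OF f1 fe e0 der])
    have "x - y = - v - e" unfolding v_def e_def by simp
    then have psi: "g x \<bullet> (x - y) = - (g x \<bullet> v) - g x \<bullet> e" by (simp add: inner_diff_right)
    have "f x - f y = g x \<bullet> (x - y) - (f y' - f x - g x \<bullet> v)"
      using fy ge psi by simp
    moreover have "f y' - f x - g x \<bullet> v < (1 - \<rho>) * \<epsilon>" using R nv by linarith
    moreover have "(1 - \<rho>) * \<epsilon> \<le> (1 - \<rho>) * (g x \<bullet> (x - y))" using gt par by auto
    ultimately have "\<rho> * (g x \<bullet> (x - y)) < f x - f y" by (simp add: algebra_simps)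
    then show False using lt fm by linarith
  qed
qed

end
context smil_loc begin

lemma reach_inv:
  assumes "S\<^sup>*\<^sup>* a b" "case a of (x,m,\<Delta>) \<Rightarrow> x \<in> X \<and> f x \<le> m \<and> 0 < \<Delta>"
  shows "case b of (x,m,\<Delta>) \<Rightarrow> x \<in> X \<and> f x \<le> m \<and> 0 < \<Delta>"
  using assms
proof (induction rule: rtranclp_induct)
  case base then show ?case by simp
next
  case (step b c)
  obtain x m \<Delta> where b: "b = (x,m,\<Delta>)" by (cases b) auto
  obtain x' m' \<Delta>' where c: "c = (x',m',\<Delta>')" by (cases c) auto
  show ?case using step_inv[of x m \<Delta> x' m' \<Delta>'] step b c by auto
qed

lemma no_inf:
  assumes bdd: "bdd_below (f ` X)" and x0: "x0 \<in> X" and D0: "0 < \<Delta>0"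
    and s0: "s 0 = (x0, f x0, \<Delta>0)" and st: "\<forall>k. S (s k) (s (Suc k))"
  shows False
proof -
  define xs where "xs k = fst (s k)" for k
  define ms where "ms k = fst (snd (s k))" for k
  define ds where "ds k = snd (snd (s k))" for k
  have sk: "s k = (xs k, ms k, ds k)" for k unfolding xs_def ms_def ds_def by simp
  have stk: "S (xs k, ms k, ds k) (xs (Suc k), ms (Suc k), ds (Suc k))" for k
    using st sk by metis
  have inv: "xs k \<in> X \<and> f (xs k) \<le> ms k \<and> 0 < ds k" for k
  proof (induction k)
    case 0 then show ?case using s0 sk[of 0] x0 D0 by auto
  next
    case (Suc k) then show ?case using step_inv[OF stk[of k]] by blast
  qed
  note dec = step_dec[OF stk]
  obtain L where L: "\<forall>x\<in>X. L \<le> f x" using bdd unfolding bdd_below_def by auto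
  have Lm: "L \<le> ms k" for k using L inv[of k] by fastforce
  have anti: "ms j \<le> ms i" if "i \<le> j" for i j
    using lift_Suc_antimono_le[of ms, OF _ that] dec by blast
  define \<delta> where "\<delta> = \<kappa>m * \<rho> * \<epsilon>"
  have \<delta>: "\<delta> > 0" unfolding \<delta>_def using par eps by auto
  have "\<exists>K. \<forall>k\<ge>K. \<not> (ms (Suc k) \<le> ms k - \<delta>)"
  proof (rule ccontr)
    assume "\<not> ?thesis"
    then have inf: "\<forall>K. \<exists>k\<ge>K. ms (Suc k) \<le> ms k - \<delta>" by auto
    have "\<exists>k. ms k \<le> ms 0 - real n * \<delta>" for n
    proof (induction n)
      case 0 then show ?case by auto
    next
      case (Suc n)
      then obtain k where k: "ms k \<le> ms 0 - real n * \<delta>" by blast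
      obtain j where j: "j \<ge> k" "ms (Suc j) \<le> ms j - \<delta>" using inf by blast
      have "ms j \<le> ms k" using anti j(1) by blast
      then have "ms (Suc j) \<le> ms 0 - real (Suc n) * \<delta>" using k j(2) by (simp add: algebra_simps)
      then show ?case by blast
    qed
    then have ex: "\<exists>k. ms k \<le> ms 0 - real n * \<delta>" for n by blast
    obtain n where n: "ms 0 - L < real n * \<delta>" using reals_Archimedean3[OF \<delta>] by blast
    obtain k where "ms k \<le> ms 0 - real n * \<delta>" using ex by blast
    then have "ms k < L" using n by linarith
    then show False using Lm[of k] by linarith
  qed
  then obtain K where K: "\<forall>k\<ge>K. \<not> (ms (Suc k) \<le> ms k - \<delta>)" by blast
  have stay: "xs (K+j) = xs K \<and> ms (K+j) = ms K \<and> ds (K+j) = \<kappa>^j * ds K" for j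
  proof (induction j)
    case 0 then show ?case by simp
  next
    case (Suc j)
    have "\<not> (ms (Suc (K+j)) \<le> ms (K+j) - \<delta>)" using K by simp
    then have "xs (Suc (K+j)) = xs (K+j) \<and> ms (Suc (K+j)) = ms (K+j) \<and> ds (Suc (K+j)) = \<kappa> * ds (K+j)"
      using dec[of "K+j"] unfolding \<delta>_def by blast
    then show ?case using Suc by simp
  qed
  have bad: "\<exists>y\<in>sub_argmin g X l1 I (xs K) (\<kappa>^j * ds K). \<epsilon> < g (xs K) \<bullet> (xs K - y) \<and>
      ms K - f y < \<rho> * (g (xs K) \<bullet> (xs K - y))" for j
  proof -
    have "\<not> (ms (Suc (K+j)) \<le> ms (K+j) - \<delta>)" using K by simp
    then show ?thesis using dec[of "K+j"] stay[of j] unfolding \<delta>_def by auto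
  qed
  obtain D where D: "D > 0" and nD: "\<forall>\<Delta>. \<Delta> < D \<longrightarrow>
          \<not> (\<exists>y\<in>sub_argmin g X l1 I (xs K) \<Delta>. \<epsilon> < g (xs K) \<bullet> (xs K - y) \<and> ms K - f y < \<rho> * (g (xs K) \<bullet> (xs K - y)))"
    using no_small[of "xs K" "ms K"] inv[of K] by blast
  have dK: "ds K > 0" using inv by blast
  obtain j where j: "\<kappa>^j < D / ds K" using real_arch_pow_inv[of "D / ds K" \<kappa>] D dK par by auto
  then have "\<kappa>^j * ds K < D" using dK by (simp add: pos_less_divide_eq)
  then show False using nD bad[of j] by blast
qed

end
theorem mainTheorem9:
  fixes f :: "real^'n::finite \<Rightarrow> real" and g :: "real^'n \<Rightarrow> real^'n"
    and Xbar :: "(real^'n) set" and I :: "'n set" and l1 :: bool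
    and x0 :: "real^'n"
    and \<epsilon> \<Delta>0 \<rho> \<kappa> \<kappa>m \<rho>1 \<rho>2 \<Delta>min \<Delta>max :: real
  assumes poly: "polyhedron Xbar"
    and nonempty: "feasible Xbar I \<noteq> {}"
    and A1_grad: "\<forall>x. (f has_derivative (\<lambda>h. g x \<bullet> h)) (at x)"
    and A1_cont: "continuous_on UNIV g"
    and A1_lip: "\<forall>x. \<exists>r>0. \<exists>L. \<forall>y\<in>ball x r. \<forall>z\<in>ball x r. norm (g y - g z) \<le> L * norm (y - z)"
    and A2: "\<exists>f1 :: real^'n \<Rightarrow> real. \<exists>c :: real^'n.
               (\<forall>x y. (\<forall>i. i \<notin> I \<longrightarrow> x$i = y$i) \<longrightarrow> f1 x = f1 y) \<and>
               (\<forall>x. f x = f1 x + (\<Sum>i\<in>I. c$i * x$i))"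
    and A3: "\<exists>B. \<forall>x\<in>feasible Xbar I. \<forall>i\<in>I. \<bar>x$i\<bar> \<le> B"
    and bdd: "bdd_below (f ` feasible Xbar I)"
    and x0: "x0 \<in> feasible Xbar I"
    and eps: "\<epsilon> > 0"
    and par: "\<Delta>0 > 0" "0 < \<rho>" "\<rho> < 1" "0 < \<kappa>" "\<kappa> < 1" "0 < \<kappa>m" "\<kappa>m \<le> 1"
             "\<rho> \<le> \<rho>1" "\<rho>1 < \<rho>2" "\<rho>2 < 1" "0 < \<Delta>min" "\<Delta>min \<le> \<Delta>max"
  shows "(\<nexists>s. s 0 = (x0, f x0, \<Delta>0) \<and>
            (\<forall>k. smil_step f g (feasible Xbar I) l1 I \<epsilon> \<rho> \<kappa> \<kappa>m \<rho>1 \<rho>2 \<Delta>min \<Delta>max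
                   (s k) (s (Suc k)))) \<and>
         (\<forall>x m \<Delta>.
            (smil_step f g (feasible Xbar I) l1 I \<epsilon> \<rho> \<kappa> \<kappa>m \<rho>1 \<rho>2 \<Delta>min \<Delta>max)\<^sup>*\<^sup>*
               (x0, f x0, \<Delta>0) (x, m, \<Delta>) \<and>
            (\<nexists>c. smil_step f g (feasible Xbar I) l1 I \<epsilon> \<rho> \<kappa> \<kappa>m \<rho>1 \<rho>2 \<Delta>min \<Delta>max (x, m, \<Delta>) c)
            \<longrightarrow> x \<in> feasible Xbar I \<and> 0 < \<Delta> \<and> Psi g (feasible Xbar I) l1 I x \<Delta> \<le> \<epsilon>)"
proof -
  interpret L: smil_loc f g Xbar I l1 \<epsilon> \<rho> \<kappa> \<kappa>m \<rho>1 \<rho>2 \<Delta>min \<Delta>max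
    using poly A1_grad A2 A3 eps par by unfold_locales auto
  show ?thesis
  proof (intro conjI allI impI)
    show "\<nexists>s. s 0 = (x0, f x0, \<Delta>0) \<and>
            (\<forall>k. smil_step f g (feasible Xbar I) l1 I \<epsilon> \<rho> \<kappa> \<kappa>m \<rho>1 \<rho>2 \<Delta>min \<Delta>max (s k) (s (Suc k)))"
      using L.no_inf[OF bdd x0 par(1)] by blast
  next
    fix x m \<Delta>
    assume h: "(smil_step f g (feasible Xbar I) l1 I \<epsilon> \<rho> \<kappa> \<kappa>m \<rho>1 \<rho>2 \<Delta>min \<Delta>max)\<^sup>*\<^sup>*
               (x0, f x0, \<Delta>0) (x, m, \<Delta>) \<and>
            (\<nexists>c. smil_step f g (feasible Xbar I) l1 I \<epsilon> \<rho> \<kappa> \<kappa>m \<rho>1 \<rho>2 \<Delta>min \<Delta>max (x, m, \<Delta>) c)"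
    have i: "x \<in> feasible Xbar I \<and> f x \<le> m \<and> 0 < \<Delta>"
      using L.reach_inv[of "(x0, f x0, \<Delta>0)" "(x, m, \<Delta>)"] h x0 par(1) by auto
    then show "x \<in> feasible Xbar I" "0 < \<Delta>" by auto
    show "Psi g (feasible Xbar I) l1 I x \<Delta> \<le> \<epsilon>"
      using L.terminal[of x \<Delta> m] i h by blast
  qed
qed

end
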